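(* Let $n\ge 1$ and consider the Zeckendorf game on $n$ starting from the state $\{F_1^n\}$. Every game path that follows the Split-First Strategy has the maximum possible length among all game paths from $\{F_1^n\}$. (More generally, starting from any game state, every game path following the Split-First Strategy has maximal length among all game paths starting from that state.)
   Context: Fibonacci numbers are indexed by $F_1=1$, $F_2=2$, $F_{i+1}=F_i+F_{i-1}$. A game state is a finite multiset of Fibonacci numbers (tracked by index); $\{F_1^n\}$ denotes $n$ copies of $F_1$. The legal moves are: $C_1$: replace $F_1,F_1$ by $F_2$; for $i\ge 2$, $C_i$: replace $F_{i-1},F_i$ by $F_{i+1}$ (a "combining move"); $S_2$: replace $F_2,F_2$ by $F_1,F_3$; for $i\ge 3$, $S_i$: replace $F_i,F_i$ by $F_{i-2},F_{i+1}$ (a "splitting move"). Here $C_1$ ("combine 1") is grouped with the splitting moves, and "combining move" means $C_i$ with $i\ge 2$. The game on $n$ starts at $\{F_1^n\}$; the total sum $n$ is invariant, no legal move exists exactly at the Zeckendorf decomposition of $n$ (the unique representation of $n$ as a sum of $F_i$'s with distinct, pairwise non-consecutive indices), and every sequence of legal moves is finite. A game path from a state $G$ is a sequence of legal moves starting at $G$ and continuing until no legal move is available; its length is its number of moves. A game path follows the Split-First Strategy if at each state along it: whenever some splitting move or $C_1$ is available, the move taken is one of those (any choice); otherwise the move taken is the combining move $C_i$ ($i\ge 2$) with the smallest index $i$ among those available. *)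

theory Defs
  imports Main "HOL-Library.Multiset"
begin

text \<open>A game state is a finite multiset of Fibonacci indices (index i stands for F_i,
  with F_1 = 1, F_2 = 2, F_(i+1) = F_i + F_(i-1)); all indices are at least 1.\<close>

type_synonym zstate = "nat multiset"

datatype zmove = Comb nat | Spl nat

fun legal :: "zmove \<Rightarrow> zstate \<Rightarrow> bool" where
  "legal (Comb i) G =
     (if i = 1 then count G 1 \<ge> 2
      else if i \<ge> 2 then (i - 1) \<in># G \<and> i \<in># G
      else False)"
| "legal (Spl i) G = (i \<ge> 2 \<and> count G i \<ge> 2)"

fun apply_move :: "zmove \<Rightarrow> zstate \<Rightarrow> zstate" where
  "apply_move (Comb i) G =
     (if i = 1 then G - {#1, 1#} + {#2#}
      else G - {#i - 1, i#} + {#i + 1#})"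
| "apply_move (Spl i) G =
     (if i = 2 then G - {#2, 2#} + {#1, 3#}
      else G - {#i, i#} + {#i - 2, i + 1#})"

fun split_class :: "zmove \<Rightarrow> bool" where
  "split_class (Comb i) = (i = 1)"
| "split_class (Spl i) = True"

definition terminal :: "zstate \<Rightarrow> bool" where
  "terminal G \<longleftrightarrow> (\<forall>m. \<not> legal m G)"

fun legal_seq :: "zmove list \<Rightarrow> zstate \<Rightarrow> bool" where
  "legal_seq [] G = True"
| "legal_seq (m # ms) G = (legal m G \<and> legal_seq ms (apply_move m G))"

fun final_state :: "zmove list \<Rightarrow> zstate \<Rightarrow> zstate" where
  "final_state [] G = G"
| "final_state (m # ms) G = final_state ms (apply_move m G)"

definition game_path :: "zstate \<Rightarrow> zmove list \<Rightarrow> bool" where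
  "game_path G ms \<longleftrightarrow> legal_seq ms G \<and> terminal (final_state ms G)"

definition split_first_move :: "zstate \<Rightarrow> zmove \<Rightarrow> bool" where
  "split_first_move G m \<longleftrightarrow>
     (if \<exists>m'. legal m' G \<and> split_class m'
      then legal m G \<and> split_class m
      else (\<exists>i\<ge>2. m = Comb i \<and> legal (Comb i) G \<and>
                   (\<forall>j\<ge>2. legal (Comb j) G \<longrightarrow> i \<le> j)))"

fun split_first_seq :: "zstate \<Rightarrow> zmove list \<Rightarrow> bool" where
  "split_first_seq G [] = True"
| "split_first_seq G (m # ms) = (split_first_move G m \<and> split_first_seq (apply_move m G) ms)"

definition split_first_path :: "zstate \<Rightarrow> zmove list \<Rightarrow> bool" where
  "split_first_path G ms \<longleftrightarrow> game_path G ms \<and> split_first_seq G ms"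

end

theory Submission
  imports Defs
begin

fun lhs :: "zmove \<Rightarrow> nat multiset" where
  "lhs (Comb i) = (if i = 1 then {#1, 1#} else {#i - 1, i#})"
| "lhs (Spl i) = {#i, i#}"

fun rhs :: "zmove \<Rightarrow> nat multiset" where
  "rhs (Comb i) = (if i = 1 then {#2#} else {#i + 1#})"
| "rhs (Spl i) = (if i = 2 then {#1, 3#} else {#i - 2, i + 1#})"

lemma apply_lr: "apply_move m G = G - lhs m + rhs m"
  by (cases m) auto

lemma mem_count: "x \<in># M \<longleftrightarrow> 0 < count M x" by (rule count_greater_zero_iff[symmetric])

lemma sub2: "2 \<le> count G a \<Longrightarrow> {#a, a#} \<subseteq># G"
  unfolding subseteq_mset_def
proof
  fix x assume "2 \<le> count G a"
  then show "count {#a, a#} x \<le> count G x" by (cases "x = a") auto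
qed

lemma sub11: "a \<in># G \<Longrightarrow> b \<in># G \<Longrightarrow> a \<noteq> b \<Longrightarrow> {#a, b#} \<subseteq># G"
  unfolding subseteq_mset_def
proof
  fix x assume "a \<in># G" "b \<in># G" "a \<noteq> b"
  moreover have "0 < count G a" "0 < count G b" using calculation by auto
  ultimately show "count {#a, b#} x \<le> count G x"
    by (cases "x = a"; cases "x = b") auto
qed

lemma legal_lhs: "legal m G \<Longrightarrow> lhs m \<subseteq># G"
proof (cases m)
  case (Comb i)
  assume l: "legal m G"
  show ?thesis
  proof (cases "i = 1")
    case True
    then show ?thesis using l Comb by (simp add: sub2)
  next
    case False
    then have "i \<ge> 2" "i - 1 \<in># G" "i \<in># G" using l Comb by (auto split: if_splits)
    then show ?thesis using Comb False by (simp add: sub11)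
  qed
next
  case (Spl i)
  assume "legal m G"
  then show ?thesis using Spl by (simp add: sub2)
qed

lemma decomp: "legal m G \<Longrightarrow> \<exists>R. G = R + lhs m \<and> apply_move m G = R + rhs m"
proof -
  assume "legal m G"
  then have "lhs m \<subseteq># G" by (rule legal_lhs)
  then have "G = (G - lhs m) + lhs m" by simp
  moreover have "apply_move m G = (G - lhs m) + rhs m" by (simp add: apply_lr)
  ultimately show ?thesis by blast
qed

definition mu :: "nat multiset \<Rightarrow> nat \<times> nat" where
  "mu G = (size G, 3 * sum_mset G + count G 2)"

definition rel :: "(nat multiset \<times> nat multiset) set" where
  "rel = inv_image (less_than <*lex*> less_than) mu"

lemma wf_rel: "wf rel"
  unfolding rel_def by (intro wf_inv_image wf_lex_prod wf_less_than)

lemma trans_rel: "trans rel"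
  unfolding rel_def by (intro trans_inv_image trans_lex_prod trans_less_than)

lemma rel_trans: "(a, b) \<in> rel \<Longrightarrow> (b, c) \<in> rel \<Longrightarrow> (a, c) \<in> rel"
  using trans_rel by (meson transD)

lemma rel_step: assumes "legal m G" shows "(apply_move m G, G) \<in> rel"
proof -
  obtain R where R: "G = R + lhs m" "apply_move m G = R + rhs m" using decomp[OF assms] by blast
  have "(R + rhs m, R + lhs m) \<in> rel"
  proof (cases m)
    case (Comb i)
    then show ?thesis by (auto simp: rel_def mu_def)
  next
    case (Spl i)
    then have "i \<ge> 2" using assms by simp
    show ?thesis
    proof (cases "i = 2")
      case True
      then show ?thesis using Spl by (simp add: rel_def mu_def)
    next
      case False
      then show ?thesis using \<open>i \<ge> 2\<close> Spl by (simp add: rel_def mu_def) arith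
    qed
  qed
  then show ?thesis by (simp only: R(2)[symmetric] R(1)[symmetric])
qed

lemma legal_seq_append: "legal_seq (xs @ ys) G \<longleftrightarrow> legal_seq xs G \<and> legal_seq ys (final_state xs G)"
  by (induction xs arbitrary: G) auto

lemma final_state_append: "final_state (xs @ ys) G = final_state ys (final_state xs G)"
  by (induction xs arbitrary: G) auto

lemma sfm_legal: "split_first_move G m \<Longrightarrow> legal m G"
  unfolding split_first_move_def by (auto split: if_splits)

lemma sfm_exists: assumes "\<not> terminal G" shows "\<exists>m. split_first_move G m"
proof (cases "\<exists>m'. legal m' G \<and> split_class m'")
  case True
  then show ?thesis unfolding split_first_move_def by auto
next
  case False
  obtain m where m: "legal m G" using assms unfolding terminal_def by auto
  have nsc: "\<not> split_class m" using False m by blast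
  obtain i where i: "m = Comb i" "i \<ge> 2" using m nsc
    by (cases m) (auto split: if_splits)
  define i0 where "i0 = (LEAST k. 2 \<le> k \<and> legal (Comb k) G)"
  have P: "2 \<le> i0 \<and> legal (Comb i0) G" unfolding i0_def
    by (rule LeastI[of _ i]) (use i m in auto)
  have Q: "\<forall>j\<ge>2. legal (Comb j) G \<longrightarrow> i0 \<le> j" unfolding i0_def
    by (auto intro: Least_le)
  have "split_first_move G (Comb i0)" unfolding split_first_move_def using False P Q by auto
  then show ?thesis by blast
qed

lemma sfp_exists: "\<exists>ms. split_first_path G ms"
proof (induction G rule: wf_induct[OF wf_rel])
  case (1 G)
  show ?case
  proof (cases "terminal G")
    case True
    then have "split_first_path G []" by (simp add: split_first_path_def game_path_def)
    then show ?thesis by blast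
  next
    case False
    then obtain m where m: "split_first_move G m" using sfm_exists by blast
    have l: "legal m G" using sfm_legal[OF m] .
    then obtain p where p: "split_first_path (apply_move m G) p" using 1 rel_step by blast
    have "split_first_path G (m # p)" using m l p
      by (simp add: split_first_path_def game_path_def)
    then show ?thesis by blast
  qed
qed

definition sfl :: "nat multiset \<Rightarrow> nat" where
  "sfl G = length (SOME ms. split_first_path G ms)"

lemma sfl_path: "split_first_path G (SOME ms. split_first_path G ms)"
  using sfp_exists by (rule someI_ex)

definition good :: "nat multiset \<Rightarrow> bool" where
  "good G \<longleftrightarrow> (\<forall>ms ms'. split_first_path G ms \<longrightarrow> game_path G ms' \<longrightarrow> length ms' \<le> length ms)"

lemma F1: "good X \<Longrightarrow> game_path X ms \<Longrightarrow> length ms \<le> sfl X"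
  unfolding good_def sfl_def using sfl_path by blast

lemma F2: "good X \<Longrightarrow> split_first_path X ms \<Longrightarrow> length ms = sfl X"
proof -
  assume g: "good X" and p: "split_first_path X ms"
  have a: "length ms \<le> sfl X" using F1[OF g] p by (simp add: split_first_path_def)
  have "sfl X \<le> length ms" using g p sfl_path[of X]
    unfolding good_def sfl_def split_first_path_def by blast
  with a show ?thesis by simp
qed

lemma F3: "good X \<Longrightarrow> legal_seq ms X \<Longrightarrow> length ms + sfl (final_state ms X) \<le> sfl X"
proof -
  assume g: "good X" and l: "legal_seq ms X"
  let ?p = "SOME p. split_first_path (final_state ms X) p"
  have p: "split_first_path (final_state ms X) ?p" by (rule sfl_path)
  have "game_path X (ms @ ?p)" using l p
    by (simp add: game_path_def split_first_path_def legal_seq_append final_state_append)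
  then have "length (ms @ ?p) \<le> sfl X" by (rule F1[OF g])
  then show ?thesis by (simp add: sfl_def)
qed

lemma F3one: "good X \<Longrightarrow> legal m X \<Longrightarrow> 1 + sfl (apply_move m X) \<le> sfl X"
  using F3[of X "[m]"] by simp

lemma F4: "good X \<Longrightarrow> split_first_move X m \<Longrightarrow> sfl X = 1 + sfl (apply_move m X)"
proof -
  assume g: "good X" and m: "split_first_move X m"
  let ?p = "SOME p. split_first_path (apply_move m X) p"
  have p: "split_first_path (apply_move m X) ?p" by (rule sfl_path)
  have "split_first_path X (m # ?p)" using p m sfm_legal[OF m]
    by (simp add: game_path_def split_first_path_def)
  then have "length (m # ?p) = sfl X" by (rule F2[OF g])
  then have "Suc (length ?p) = sfl X" by simp
  moreover have "sfl (apply_move m X) = length ?p" by (simp only: sfl_def)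
  ultimately show ?thesis by linarith
qed

lemma count_apply: "count (apply_move m G) x = count G x - count (lhs m) x + count (rhs m) x"
  unfolding apply_lr by (simp only: count_union count_diff)

lemma sc_sfm: assumes "legal m X" "split_class m" shows "split_first_move X m"
proof -
  have "\<exists>m'. legal m' X \<and> split_class m'" using assms by blast
  then show ?thesis using assms unfolding split_first_move_def by simp
qed


lemmas cnt = count_apply mem_count

lemma rel_two: "legal m G \<Longrightarrow> legal m' (apply_move m G) \<Longrightarrow> (apply_move m' (apply_move m G), G) \<in> rel"
  by (meson rel_step rel_trans)

lemma reach_le:
  assumes IH: "\<And>X. (X, G) \<in> rel \<Longrightarrow> good X" and lm: "legal m G"
    and ls: "legal_seq ms (apply_move m G)" and fs: "final_state ms (apply_move m G) = B"
  shows "sfl B \<le> sfl (apply_move m G)"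
  using F3[OF IH[OF rel_step[OF lm]] ls] fs by simp

lemma comm_eq: assumes "legal a G" "legal b G" "legal b (apply_move a G)" "legal a (apply_move b G)"
  shows "apply_move b (apply_move a G) = apply_move a (apply_move b G)"
proof -
  have s: "lhs a \<subseteq># G" "lhs b \<subseteq># G" "lhs b \<subseteq># apply_move a G" "lhs a \<subseteq># apply_move b G"
    using assms legal_lhs by blast+
  show ?thesis
  proof (rule multiset_eqI)
    fix x
    have "count (lhs a) x \<le> count G x" "count (lhs b) x \<le> count G x"
      "count (lhs b) x \<le> count (apply_move a G) x" "count (lhs a) x \<le> count (apply_move b G) x"
      using s by (auto simp: subseteq_mset_def)
    then show "count (apply_move b (apply_move a G)) x = count (apply_move a (apply_move b G)) x"
      unfolding count_apply by linarith
  qed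
qed

lemma reach_le':
  assumes IH: "\<And>X. (X, G) \<in> rel \<Longrightarrow> good X" and lm: "legal m G"
    and ls: "legal_seq ms (apply_move m G) \<and> final_state ms (apply_move m G) = apply_move m' G"
  shows "sfl (apply_move m' G) \<le> sfl (apply_move m G)"
  using reach_le[OF IH lm] ls by blast

lemma commute_le:
  assumes IH: "\<And>X. (X, G) \<in> rel \<Longrightarrow> good X" and lm: "legal m G" and lm': "legal m' G"
    and sc: "split_class m" and l12: "legal m (apply_move m' G) \<and> legal m' (apply_move m G)"
  shows "sfl (apply_move m' G) \<le> sfl (apply_move m G)"
proof -
  have l1: "legal m (apply_move m' G)" and l2: "legal m' (apply_move m G)" using l12 by auto
  have eq: "apply_move m' (apply_move m G) = apply_move m (apply_move m' G)"
    by (rule comm_eq[OF lm lm' l2 l1])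
  have gB: "good (apply_move m' G)" using IH rel_step lm' by blast
  have gA: "good (apply_move m G)" using IH rel_step lm by blast
  have "sfl (apply_move m' G) = 1 + sfl (apply_move m (apply_move m' G))"
    by (rule F4[OF gB sc_sfm[OF l1 sc]])
  moreover have "1 + sfl (apply_move m' (apply_move m G)) \<le> sfl (apply_move m G)"
    by (rule F3one[OF gA l2])
  ultimately show ?thesis using eq by simp
qed

lemma legal_comb_cnt': "legal (Comb j) G \<Longrightarrow> j \<noteq> 1 \<Longrightarrow> j \<ge> 2"
  by (cases "j = 0") auto

lemma core_split:
  assumes IH: "\<And>X. (X, G) \<in> rel \<Longrightarrow> good X" and lm: "legal m G" and sc: "split_class m"
    and lm': "legal m' G"
  shows "sfl (apply_move m' G) \<le> sfl (apply_move m G)"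
proof (cases "m' = m")
  case True
  then show ?thesis by simp
next
  case neq: False
  show ?thesis
  proof (cases m)
    case (Comb a)
    then have a: "a = 1" using sc by simp
    have lmG: "legal (Comb 1) G" using lm Comb a by simp
    show ?thesis
    proof (cases m')
      case (Comb j)
      have "j \<noteq> 1" using neq \<open>m = Comb a\<close> a Comb by auto
      then have "j \<ge> 2" using lm' Comb legal_comb_cnt' by blast
      then obtain q where q: "j = Suc (Suc q)" by (metis add_2_eq_Suc le_Suc_ex)
      have lmG': "legal (Comb (Suc (Suc q))) G" using lm' Comb q by simp
      show ?thesis
      proof (cases "q = 0")
        case True
        have "legal_seq [Spl 2] (apply_move m G) \<and> final_state [Spl 2] (apply_move m G) = apply_move m' G"
          using True lmG lmG' \<open>m = Comb a\<close> a Comb q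
          by (simp add: cnt multiset_eq_iff numeral_eq_Suc del: count_greater_zero_iff)
        then show ?thesis using reach_le'[OF IH lm] by blast
      next
        case False
        have "legal m (apply_move m' G) \<and> legal m' (apply_move m G)"
          using False lmG lmG' \<open>m = Comb a\<close> a Comb q
          by (auto simp: cnt numeral_eq_Suc simp del: count_greater_zero_iff)
        then show ?thesis using commute_le[OF IH lm lm' sc] by blast
      qed
    next
      case (Spl c)
      have "c \<ge> 2" using lm' Spl by auto
      then obtain p' where p': "c = Suc (Suc p')" by (metis add_2_eq_Suc le_Suc_ex)
      have lmG': "legal (Spl (Suc (Suc p'))) G" using lm' Spl p' by simp
      have "legal m (apply_move m' G) \<and> legal m' (apply_move m G)"
        using lmG lmG' \<open>m = Comb a\<close> a Spl p'
        by (auto simp: cnt numeral_eq_Suc simp del: count_greater_zero_iff)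
      then show ?thesis using commute_le[OF IH lm lm' sc] by blast
    qed
  next
    case (Spl k)
    have "k \<ge> 2" using lm Spl by auto
    then obtain p where p: "k = Suc (Suc p)" by (metis add_2_eq_Suc le_Suc_ex)
    have lmG: "legal (Spl (Suc (Suc p))) G" using lm Spl p by simp
    show ?thesis
    proof (cases m')
      case (Comb j)
      show ?thesis
      proof (cases "j = 1")
        case True
        have lmG': "legal (Comb 1) G" using lm' Comb True by simp
        have "legal m (apply_move m' G) \<and> legal m' (apply_move m G)"
          using lmG lmG' True Comb Spl p
          by (auto simp: cnt numeral_eq_Suc simp del: count_greater_zero_iff)
        then show ?thesis using commute_le[OF IH lm lm' sc] by blast
      next
        case False
        then have "j \<ge> 2" using lm' Comb legal_comb_cnt' by blast
        then obtain q where q: "j = Suc (Suc q)" by (metis add_2_eq_Suc le_Suc_ex)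
        have lmG': "legal (Comb (Suc (Suc q))) G" using lm' Comb q by simp
        consider (a2) "p = 0" "q = 1" | (a3) r where "p = Suc r" "q = Suc (Suc r)" | (b2) "p = 0" "q = 0"
          | (b3) r where "p = Suc r" "q = Suc r" | (c) "q \<noteq> p" "q \<noteq> Suc p"
        proof (cases p)
          case 0
          then show ?thesis using a2 b2 c by (cases "q = 0"; cases "q = 1") auto
        next
          case (Suc r)
          then show ?thesis using a3 b3 c by (cases "q = Suc r"; cases "q = Suc (Suc r)") auto
        qed
        then show ?thesis
        proof cases
          case a2
          have "legal_seq [Spl 3, Comb 1] (apply_move m G) \<and> final_state [Spl 3, Comb 1] (apply_move m G) = apply_move m' G"
            using a2 lmG lmG' Comb Spl p q
            by (simp add: cnt multiset_eq_iff numeral_eq_Suc del: count_greater_zero_iff)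
          then show ?thesis using reach_le'[OF IH lm] by blast
        next
          case a3
          have "legal_seq [Spl (Suc (Suc (Suc (Suc r)))), Comb (Suc (Suc r))] (apply_move m G) \<and> final_state [Spl (Suc (Suc (Suc (Suc r)))), Comb (Suc (Suc r))] (apply_move m G) = apply_move m' G"
            using a3 lmG lmG' Comb Spl p q
            by (simp add: cnt multiset_eq_iff numeral_eq_Suc del: count_greater_zero_iff)
          then show ?thesis using reach_le'[OF IH lm] by blast
        next
          case b2
          have "legal_seq [Comb 1] (apply_move m G) \<and> final_state [Comb 1] (apply_move m G) = apply_move m' G"
            using b2 lmG lmG' Comb Spl p q
            by (simp add: cnt multiset_eq_iff numeral_eq_Suc del: count_greater_zero_iff)
          then show ?thesis using reach_le'[OF IH lm] by blast
        next
          case b3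
          have "legal_seq [Comb (Suc (Suc r))] (apply_move m G) \<and> final_state [Comb (Suc (Suc r))] (apply_move m G) = apply_move m' G"
            using b3 lmG lmG' Comb Spl p q
            by (simp add: cnt multiset_eq_iff numeral_eq_Suc del: count_greater_zero_iff)
          then show ?thesis using reach_le'[OF IH lm] by blast
        next
          case c
          have "legal m (apply_move m' G) \<and> legal m' (apply_move m G)"
            using c lmG lmG' Comb Spl p q
            by (auto simp: cnt numeral_eq_Suc simp del: count_greater_zero_iff)
          then show ?thesis using commute_le[OF IH lm lm' sc] by blast
        qed
      qed
    next
      case (Spl c)
      have "c \<ge> 2" using lm' Spl by auto
      then obtain p' where p': "c = Suc (Suc p')" by (metis add_2_eq_Suc le_Suc_ex)
      have lmG': "legal (Spl (Suc (Suc p'))) G" using lm' Spl p' by simp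
      have "p' \<noteq> p" using neq Spl \<open>m = Spl k\<close> p p' by auto
      have "legal m (apply_move m' G) \<and> legal m' (apply_move m G)"
        using \<open>p' \<noteq> p\<close> lmG lmG' \<open>m = Spl k\<close> Spl p p'
        by (auto simp: cnt numeral_eq_Suc simp del: count_greater_zero_iff)
      then show ?thesis using commute_le[OF IH lm lm' sc] by blast
    qed
  qed
qed


lemma mem_eq: "count X y = count G y \<Longrightarrow> y \<in># G \<Longrightarrow> y \<in># X"
  by (metis count_greater_zero_iff)

lemma lemL:
  assumes IH: "\<And>X. (X, G) \<in> rel \<Longrightarrow> good X"
    and sl: "\<forall>k\<ge>1. count G k \<le> 1"
    and i2: "2 \<le> i" and li: "legal (Comb i) G"
    and mn: "\<forall>k. 2 \<le> k \<longrightarrow> k < i \<longrightarrow> \<not> legal (Comb k) G"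
  shows "i + 2 \<le> j \<Longrightarrow> legal (Comb j) G \<Longrightarrow>
    sfl (apply_move (Comb j) G) \<le> 1 + sfl (apply_move (Comb i) (apply_move (Comb j) G))"
proof (induction "Max (set_mset G) - j" arbitrary: j rule: less_induct)
  case (less j)
  have jij: "i + 2 \<le> j" and lj: "legal (Comb j) G" using less.prems by auto
  have cj: "0 < count G (j - 1)" "0 < count G j" using lj jij i2 by auto
  have ci: "0 < count G (i - 1)" "0 < count G i" using li i2 by auto
  define X1 where "X1 = apply_move (Comb j) G"
  have rel1: "(X1, G) \<in> rel" unfolding X1_def by (rule rel_step[OF lj])
  have gX1: "good X1" using IH rel1 by blast
  have cX1: "\<And>y. count X1 y = count G y - (if y = j - 1 then 1 else 0) - (if y = j then 1 else 0)
      + (if y = j + 1 then 1 else 0)"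
    unfolding X1_def count_apply using jij i2 by auto
  have "count X1 (i - 1) = count G (i - 1)" "count X1 i = count G i"
    using cX1[of "i - 1"] cX1[of i] jij i2 by auto
  then have "i - 1 \<in># X1" "i \<in># X1" using ci by (metis count_greater_zero_iff)+
  then have liX1: "legal (Comb i) X1" using i2 by auto
  show ?case
  proof (cases "j + 1 \<in># G")
    case True
    have cj1: "0 < count G (j + 1)" using True by auto
    have ls: "legal (Spl (j + 1)) X1" using cX1[of "j + 1"] cj1 jij i2 by auto
    have e1: "sfl X1 = 1 + sfl (apply_move (Spl (j + 1)) X1)"
      by (rule F4[OF gX1 sc_sfm[OF ls]]) simp
    have eq1: "apply_move (Spl (j + 1)) X1 = apply_move (Comb (j + 1)) G"
    proof (rule multiset_eqI)
      fix y
      show "count (apply_move (Spl (j + 1)) X1) y = count (apply_move (Comb (j + 1)) G) y"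
        unfolding count_apply cX1 using jij i2 cj cj1 by auto
    qed
    have lj1: "legal (Comb (j + 1)) G" using cj cj1 jij i2 by auto
    have "j + 1 \<le> Max (set_mset G)" using True by simp
    then have lt: "Max (set_mset G) - (j + 1) < Max (set_mset G) - j" by arith
    have IHL: "sfl (apply_move (Comb (j + 1)) G) \<le> 1 + sfl (apply_move (Comb i) (apply_move (Comb (j + 1)) G))"
      using less.hyps[OF lt] lj1 jij by auto
    define Y where "Y = apply_move (Comb i) X1"
    have relY: "(Y, G) \<in> rel" unfolding Y_def using rel_step[OF liX1] rel1 by (rule rel_trans)
    have gY: "good Y" using IH relY by blast
    have cY: "\<And>y. count Y y = count X1 y - (if y = i - 1 then 1 else 0) - (if y = i then 1 else 0)
      + (if y = i + 1 then 1 else 0)"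
      unfolding Y_def count_apply using jij i2 by auto
    have lsY: "legal (Spl (j + 1)) Y" using cY[of "j + 1"] cX1[of "j + 1"] cj1 jij i2 by auto
    have "count (apply_move (Comb (j + 1)) G) (i - 1) = count G (i - 1)"
      "count (apply_move (Comb (j + 1)) G) i = count G i"
      using jij i2 by (auto simp: count_apply)
    then have "i - 1 \<in># apply_move (Comb (j + 1)) G" "i \<in># apply_move (Comb (j + 1)) G"
      using ci by (metis count_greater_zero_iff)+
    then have liS: "legal (Comb i) (apply_move (Spl (j + 1)) X1)" using i2 eq1 by auto
    have eq2: "apply_move (Spl (j + 1)) Y = apply_move (Comb i) (apply_move (Comb (j + 1)) G)"
      unfolding Y_def using comm_eq[OF liX1 ls lsY[unfolded Y_def] liS] eq1 by simp
    have f3: "1 + sfl (apply_move (Spl (j + 1)) Y) \<le> sfl Y" by (rule F3one[OF gY lsY])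
    show ?thesis using e1 eq1 IHL eq2 f3 unfolding X1_def Y_def by simp
  next
    case False
    have cj1: "count G (j + 1) = 0" using False by (simp add: not_in_iff)
    have nsc: "\<not> (\<exists>m'. legal m' X1 \<and> split_class m')"
    proof
      assume "\<exists>m'. legal m' X1 \<and> split_class m'"
      then obtain m' where l: "legal m' X1" and s: "split_class m'" by blast
      show False
      proof (cases m')
        case (Comb c)
        then have "c = 1" using s by simp
        then have "2 \<le> count X1 1" using l Comb by simp
        then show False using cX1[of 1] sl jij by auto
      next
        case (Spl c)
        then have "2 \<le> count X1 c" "2 \<le> c" using l by auto
        then show False using cX1[of c] sl[rule_format, of c] cj1 jij by (auto split: if_splits)
      qed
    qed
    have mnX: "\<forall>k\<ge>2. legal (Comb k) X1 \<longrightarrow> i \<le> k"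
    proof (intro allI impI)
      fix k assume k2: "2 \<le> k" and lk: "legal (Comb k) X1"
      show "i \<le> k"
      proof (rule ccontr)
        assume "\<not> i \<le> k"
        then have "k < i" by simp
        have m1: "k - 1 \<in># X1" "k \<in># X1" using lk k2 by auto
        have "count X1 (k - 1) = count G (k - 1)" "count X1 k = count G k"
          using cX1[of "k - 1"] cX1[of k] \<open>k < i\<close> jij by auto
        then have "k - 1 \<in># G" "k \<in># G" using m1 by (metis count_greater_zero_iff)+
        then have "legal (Comb k) G" using k2 by auto
        then show False using mn k2 \<open>k < i\<close> by blast
      qed
    qed
    have sfm: "split_first_move X1 (Comb i)"
      unfolding split_first_move_def using nsc liX1 mnX i2 by auto
    show ?thesis using F4[OF gX1 sfm] unfolding X1_def by simp
  qed
qed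


lemma core_comb:
  assumes IH: "\<And>X. (X, G) \<in> rel \<Longrightarrow> good X"
    and nsc: "\<not> (\<exists>m'. legal m' G \<and> split_class m')"
    and i2: "2 \<le> i" and li: "legal (Comb i) G"
    and mn: "\<forall>j\<ge>2. legal (Comb j) G \<longrightarrow> i \<le> j"
    and lm': "legal m' G"
  shows "sfl (apply_move m' G) \<le> sfl (apply_move (Comb i) G)"
proof -
  have sl: "\<forall>k\<ge>1. count G k \<le> 1"
  proof (intro allI impI)
    fix k :: nat assume k1: "1 \<le> k"
    show "count G k \<le> 1"
    proof (rule ccontr)
      assume "\<not> count G k \<le> 1"
      then have c2: "2 \<le> count G k" by simp
      show False
      proof (cases "k = 1")
        case True
        then have "legal (Comb 1) G" using c2 by simp
        then show False using nsc by fastforce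
      next
        case False
        then have "legal (Spl k) G" using c2 k1 by simp
        then show False using nsc by fastforce
      qed
    qed
  qed
  have mn': "\<forall>k. 2 \<le> k \<longrightarrow> k < i \<longrightarrow> \<not> legal (Comb k) G" using mn by fastforce
  have "\<not> split_class m'" using nsc lm' by blast
  then obtain j where mj: "m' = Comb j" and "j \<noteq> 1" by (cases m') auto
  then have j2: "j \<ge> 2" using lm' legal_comb_cnt' by blast
  have lj: "legal (Comb j) G" using lm' mj by simp
  have "i \<le> j" using mn j2 lj by blast
  have ci: "0 < count G (i - 1)" "0 < count G i" using li i2 by auto
  have cj: "0 < count G (j - 1)" "0 < count G j" using lj j2 by auto
  have gA: "good (apply_move (Comb i) G)" using IH rel_step[OF li] by blast
  consider (same) "j = i" | (next1) "j = i + 1" | (far) "i + 2 \<le> j" using \<open>i \<le> j\<close> by linarith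
  then show ?thesis
  proof cases
    case same
    then show ?thesis using mj by simp
  next
    case next1
    have cA: "count (apply_move (Comb i) G) (i + 1) = count G (i + 1) + 1"
      using i2 by (auto simp: count_apply)
    have lS: "legal (Spl (i + 1)) (apply_move (Comb i) G)" using cA cj next1 i2 by auto
    have eq: "apply_move (Spl (i + 1)) (apply_move (Comb i) G) = apply_move (Comb j) G"
    proof (rule multiset_eqI)
      fix y
      show "count (apply_move (Spl (i + 1)) (apply_move (Comb i) G)) y = count (apply_move (Comb j) G) y"
        unfolding count_apply using next1 i2 ci cj by auto
    qed
    have "1 + sfl (apply_move (Spl (i + 1)) (apply_move (Comb i) G)) \<le> sfl (apply_move (Comb i) G)"
      by (rule F3one[OF gA lS])
    then show ?thesis using eq mj by simp
  next
    case far
    have L: "sfl (apply_move (Comb j) G) \<le> 1 + sfl (apply_move (Comb i) (apply_move (Comb j) G))"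
      by (rule lemL[OF IH sl i2 li mn' far lj])
    have "count G (j - 1) \<le> count (apply_move (Comb i) G) (j - 1)"
      "count G j \<le> count (apply_move (Comb i) G) j"
      using far i2 by (auto simp: count_apply)
    then have "j - 1 \<in># apply_move (Comb i) G" "j \<in># apply_move (Comb i) G"
      using cj by (metis count_greater_zero_iff less_le_trans)+
    then have ljA: "legal (Comb j) (apply_move (Comb i) G)" using j2 by auto
    have "count (apply_move (Comb j) G) (i - 1) = count G (i - 1)"
      "count (apply_move (Comb j) G) i = count G i"
      using far i2 by (auto simp: count_apply)
    then have "i - 1 \<in># apply_move (Comb j) G" "i \<in># apply_move (Comb j) G"
      using ci by (metis count_greater_zero_iff)+
    then have liB: "legal (Comb i) (apply_move (Comb j) G)" using i2 by auto
    have eq: "apply_move (Comb j) (apply_move (Comb i) G) = apply_move (Comb i) (apply_move (Comb j) G)"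
      by (rule comm_eq[OF li lj ljA liB])
    have "1 + sfl (apply_move (Comb j) (apply_move (Comb i) G)) \<le> sfl (apply_move (Comb i) G)"
      by (rule F3one[OF gA ljA])
    then show ?thesis using eq L mj by simp
  qed
qed

lemma good_all: "good G"
proof (induction G rule: wf_induct[OF wf_rel])
  case (1 G)
  have IH: "\<And>X. (X, G) \<in> rel \<Longrightarrow> good X" using 1 by blast
  show ?case unfolding good_def
  proof (intro allI impI)
    fix ms ms' assume sp: "split_first_path G ms" and gp: "game_path G ms'"
    show "length ms' \<le> length ms"
    proof (cases ms)
      case Nil
      then have t: "terminal G" using sp by (simp add: split_first_path_def game_path_def)
      have "ms' = []"
      proof (cases ms')
        case (Cons a list)
        then have "legal a G" using gp by (simp add: game_path_def)
        then show ?thesis using t by (simp add: terminal_def)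
      qed simp
      then show ?thesis by simp
    next
      case (Cons m ms1)
      have sfm: "split_first_move G m" and sp1: "split_first_path (apply_move m G) ms1"
        using sp Cons by (simp_all add: split_first_path_def game_path_def)
      have lm: "legal m G" by (rule sfm_legal[OF sfm])
      show ?thesis
      proof (cases ms')
        case Nil
        then show ?thesis by simp
      next
        case (Cons m' ms1')
        have lm': "legal m' G" and gp1: "game_path (apply_move m' G) ms1'"
          using gp Cons by (simp_all add: game_path_def)
        have len1: "length ms1 = sfl (apply_move m G)"
          by (rule F2[OF IH[OF rel_step[OF lm]] sp1])
        have len2: "length ms1' \<le> sfl (apply_move m' G)"
          by (rule F1[OF IH[OF rel_step[OF lm']] gp1])
        have core: "sfl (apply_move m' G) \<le> sfl (apply_move m G)"
        proof (cases "\<exists>m''. legal m'' G \<and> split_class m''")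
          case True
          then have "split_class m" using sfm unfolding split_first_move_def by simp
          then show ?thesis using core_split[OF IH lm _ lm'] by blast
        next
          case False
          have "\<exists>i\<ge>2. m = Comb i \<and> legal (Comb i) G \<and> (\<forall>j\<ge>2. legal (Comb j) G \<longrightarrow> i \<le> j)"
            using sfm unfolding split_first_move_def if_not_P[OF False] .
          then obtain i where "2 \<le> i" "m = Comb i" "legal (Comb i) G"
            "\<forall>j\<ge>2. legal (Comb j) G \<longrightarrow> i \<le> j" by blast
          then show ?thesis using core_comb[OF IH False] lm' by blast
        qed
        show ?thesis using len1 len2 core \<open>ms = m # ms1\<close> Cons by simp
      qed
    qed
  qed
qed

theorem theorem1p1:
  shows "(\<forall>n::nat. n \<ge> 1 \<longrightarrow>
            (\<forall>ms ms'. split_first_path (replicate_mset n 1) ms \<longrightarrow>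
                      game_path (replicate_mset n 1) ms' \<longrightarrow> length ms' \<le> length ms))
       \<and> (\<forall>G::nat multiset. (\<forall>i\<in>#G. i \<ge> 1) \<longrightarrow>
            (\<forall>ms ms'. split_first_path G ms \<longrightarrow>
                      game_path G ms' \<longrightarrow> length ms' \<le> length ms))"
  using good_all unfolding good_def by blast


end
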